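(* Let $P$ be a finite poset and let $\mathcal{J}\subseteq \mathrm{Hom}(P,\mathbb{N})$ be a poset ideal. Then the letterplace ideal $L(\mathcal{J},P)$ and the co-letterplace ideal $L(P,\mathcal{J})$ in $k[x_{P\times\mathbb{N}}]$ are Alexander dual: the monomials of $L(\mathcal{J},P)$ are precisely the monomials of $k[x_{P\times\mathbb{N}}]$ having a nontrivial common divisor with every monomial of $L(P,\mathcal{J})$ (and vice versa).
   Context: $\mathbb{N}=\{0,1,2,\dots\}$. For a finite poset $P$, $\mathrm{Hom}(P,\mathbb{N})$ is the set of isotone maps $\phi:P\to\mathbb{N}$ (i.e. $p\le q\Rightarrow \phi(p)\le\phi(q)$), partially ordered by $\phi\le\psi$ iff $\phi(p)\le\psi(p)$ for all $p$. A poset ideal (resp. filter) is a down-closed (resp. up-closed) subset; $\mathcal{J}^c$ denotes the complement of $\mathcal{J}$ in $\mathrm{Hom}(P,\mathbb{N})$. The ascent of $\phi\in\mathrm{Hom}(P,\mathbb{N})$ is $\Lambda\phi=\{(p,i)\in P\times\mathbb{N} : \phi(q)\le i<\phi(p)\text{ for all } q<p\}$. A marker for $\mathcal{J}$ is a pair of a poset ideal $I\subseteq P$ and an isotone map $\alpha:I\to\mathbb{N}$ such that every isotone $\phi:P\to\mathbb{N}$ with $\phi|_I=\alpha$ lies in $\mathcal{J}$; its graph is $\Gamma\alpha=\{(p,\alpha(p)):p\in I\}$. Let $k$ be a field and $k[x_{P\times\mathbb{N}}]$ the polynomial ring in variables $x_{p,i}$, $(p,i)\in P\times\mathbb{N}$;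 for finite $T\subseteq P\times\mathbb{N}$ put $m_T=\prod_{t\in T}x_t$. The co-letterplace ideal $L(P,\mathcal{J})$ is generated by the $m_{\Gamma\alpha}$ for all markers $\alpha$ of $\mathcal{J}$; the letterplace ideal $L(\mathcal{J},P)$ is generated by the $m_{\Lambda\phi}$ for all $\phi\in\mathcal{J}^c$. *)

theory Defs
  imports Main "HOL-Library.Poly_Mapping"
begin

text \<open>The finite poset P is a type of class order with finite universe.
  Monomials of k[x_{P x N}] are exponent vectors (P x N) =>0 nat;
  polynomials are finitely supported maps from monomials to k.\<close>

type_synonym ('p) mon = "('p \<times> nat) \<Rightarrow>\<^sub>0 nat"
type_synonym ('p,'k) mpoly = "('p mon) \<Rightarrow>\<^sub>0 'k"

definition Hom :: "('p::order \<Rightarrow> nat) set" where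
  "Hom = {\<phi>. mono \<phi>}"

definition hom_ideal :: "('p::order \<Rightarrow> nat) set \<Rightarrow> bool" where
  "hom_ideal J \<longleftrightarrow> J \<subseteq> Hom \<and> (\<forall>\<phi>\<in>J. \<forall>\<psi>\<in>Hom. \<psi> \<le> \<phi> \<longrightarrow> \<psi> \<in> J)"

definition poset_ideal :: "'p::order set \<Rightarrow> bool" where
  "poset_ideal I \<longleftrightarrow> (\<forall>p\<in>I. \<forall>q. q \<le> p \<longrightarrow> q \<in> I)"

definition ascent :: "('p::order \<Rightarrow> nat) \<Rightarrow> ('p \<times> nat) set" where
  "ascent \<phi> = {(p, i). (\<forall>q. q < p \<longrightarrow> \<phi> q \<le> i) \<and> i < \<phi> p}"

text \<open>Markers (I, alpha) for J; only the values of alpha on I matter.\<close>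
definition marker :: "('p::order \<Rightarrow> nat) set \<Rightarrow> 'p set \<Rightarrow> ('p \<Rightarrow> nat) \<Rightarrow> bool" where
  "marker J I \<alpha> \<longleftrightarrow> poset_ideal I \<and>
     (\<forall>p\<in>I. \<forall>q\<in>I. p \<le> q \<longrightarrow> \<alpha> p \<le> \<alpha> q) \<and>
     (\<forall>\<phi>\<in>Hom. (\<forall>p\<in>I. \<phi> p = \<alpha> p) \<longrightarrow> \<phi> \<in> J)"

definition graph :: "'p set \<Rightarrow> ('p \<Rightarrow> nat) \<Rightarrow> ('p \<times> nat) set" where
  "graph I \<alpha> = {(p, \<alpha> p) | p. p \<in> I}"

definition sqf :: "('p \<times> nat) set \<Rightarrow> 'p mon" where
  "sqf T = (\<Sum>t\<in>T. Poly_Mapping.single t 1)"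

definition monpoly :: "'p mon \<Rightarrow> ('p,'k::comm_ring_1) mpoly" where
  "monpoly m = Poly_Mapping.single m 1"

definition gen_ideal :: "'a::comm_ring_1 set \<Rightarrow> 'a set" where
  "gen_ideal G = {x. \<exists>F c. finite F \<and> F \<subseteq> G \<and> x = (\<Sum>g\<in>F. c g * g)}"

definition coletterplace :: "('p::order \<Rightarrow> nat) set \<Rightarrow> ('p,'k::comm_ring_1) mpoly set" where
  "coletterplace J = gen_ideal {monpoly (sqf (graph I \<alpha>)) | I \<alpha>. marker J I \<alpha>}"

definition letterplace :: "('p::order \<Rightarrow> nat) set \<Rightarrow> ('p,'k::comm_ring_1) mpoly set" where
  "letterplace J = gen_ideal {monpoly (sqf (ascent \<phi>)) | \<phi>. \<phi> \<in> Hom - J}"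

definition mdvd :: "'p mon \<Rightarrow> 'p mon \<Rightarrow> bool" where
  "mdvd u v \<longleftrightarrow> (\<forall>t. Poly_Mapping.lookup u t \<le> Poly_Mapping.lookup v t)"

definition common_nontriv_div :: "'p mon \<Rightarrow> 'p mon \<Rightarrow> bool" where
  "common_nontriv_div u v \<longleftrightarrow> (\<exists>d. d \<noteq> 0 \<and> mdvd d u \<and> mdvd d v)"

end

theory Submission
  imports Defs
begin

lemma lk: fixes c :: "('a::cancel_comm_monoid_add) \<Rightarrow>\<^sub>0 ('b::comm_semiring_1)"
  assumes "Poly_Mapping.lookup (c * Poly_Mapping.single m 1) u \<noteq> 0"
  shows "\<exists>a. u = a + m"
proof (rule ccontr)
  assume "\<not> ?thesis"
  hence h0: "\<And>l q. (Poly_Mapping.lookup (Poly_Mapping.single m 1) q when u = l + q) = 0"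
    apply (clarsimp simp: when_def)
    subgoal for l q by (cases "q = m") (auto simp: lookup_single_not_eq)
    done
  have h: "\<And>l. (\<Sum>q. Poly_Mapping.lookup (Poly_Mapping.single m 1) q when u = l + q) = 0"
    by (simp only: h0 Sum_any.neutral)
  have "Poly_Mapping.lookup (c * Poly_Mapping.single m 1) u = 0"
    unfolding lookup_mult h by simp
  with assms show False by simp
qed

lemma lookup_sqf: "finite T \<Longrightarrow> Poly_Mapping.lookup (sqf T) t = (if t \<in> T then 1 else 0)"
  by (simp add: sqf_def lookup_sum lookup_single when_def)

lemma keys_sqf: "finite T \<Longrightarrow> Poly_Mapping.keys (sqf T) = T"
  by (auto simp: in_keys_iff lookup_sqf split: if_splits)

lemma mon_in_ideal:
  assumes fin: "\<forall>T\<in>F. finite T"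
  shows "monpoly u \<in> (gen_ideal {monpoly (sqf T) | T. T \<in> F} :: ('p,'k::field) mpoly set)
     \<longleftrightarrow> (\<exists>T\<in>F. T \<subseteq> Poly_Mapping.keys u)"
proof
  assume "monpoly u \<in> (gen_ideal {monpoly (sqf T) | T. T \<in> F} :: ('p,'k::field) mpoly set)"
  then obtain F' c where F': "finite F'" "F' \<subseteq> {monpoly (sqf T) | T. T \<in> F}"
    and eq: "(monpoly u :: ('p,'k) mpoly) = (\<Sum>g\<in>F'. c g * g)"
    unfolding gen_ideal_def by blast
  have "Poly_Mapping.lookup (monpoly u :: ('p,'k) mpoly) u = 1" by (simp add: monpoly_def)
  hence "(\<Sum>g\<in>F'. Poly_Mapping.lookup (c g * g) u) \<noteq> 0" using eq by (simp add: lookup_sum)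
  then obtain g where g: "g \<in> F'" "Poly_Mapping.lookup (c g * g) u \<noteq> 0"
    by (meson sum.neutral)
  then obtain T where T: "T \<in> F" "g = monpoly (sqf T)" using F' by blast
  then obtain a where a: "u = a + sqf T" using lk g(2) unfolding monpoly_def by metis
  have "T \<subseteq> Poly_Mapping.keys u"
  proof
    fix t assume "t \<in> T"
    hence "Poly_Mapping.lookup (sqf T) t = 1" using fin T(1) by (simp add: lookup_sqf)
    thus "t \<in> Poly_Mapping.keys u" by (simp add: a in_keys_iff lookup_add)
  qed
  thus "\<exists>T\<in>F. T \<subseteq> Poly_Mapping.keys u" using T(1) by blast
next
  assume "\<exists>T\<in>F. T \<subseteq> Poly_Mapping.keys u"
  then obtain T where T: "T \<in> F" "T \<subseteq> Poly_Mapping.keys u" by blast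
  have finT: "finite T" using fin T(1) by blast
  define v where "v = u - sqf T"
  have uv: "u = v + sqf T"
  proof (rule poly_mapping_eqI)
    fix t
    show "Poly_Mapping.lookup u t = Poly_Mapping.lookup (v + sqf T) t"
      using T(2) finT by (auto simp: v_def lookup_add lookup_minus lookup_sqf in_keys_iff)
  qed
  have "(monpoly u :: ('p,'k) mpoly) = monpoly v * monpoly (sqf T)"
    by (simp add: monpoly_def mult_single uv)
  also have "\<dots> = (\<Sum>g\<in>{monpoly (sqf T)}. (\<lambda>_. monpoly v) g * g)" by simp
  finally have eq: "(monpoly u :: ('p,'k) mpoly) = (\<Sum>g\<in>{monpoly (sqf T)}. (\<lambda>_. monpoly v) g * g)" .
  have sub: "{monpoly (sqf T)} \<subseteq> {monpoly (sqf T) | T. T \<in> F}" using T(1) by blast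
  show "monpoly u \<in> (gen_ideal {monpoly (sqf T) | T. T \<in> F} :: ('p,'k::field) mpoly set)"
    unfolding gen_ideal_def mem_Collect_eq
    by (rule exI[where x = "{monpoly (sqf T)}"], rule exI[where x = "\<lambda>_. monpoly v"])
      (use eq sub in simp)
qed

lemma cnd_iff: "common_nontriv_div u w \<longleftrightarrow> Poly_Mapping.keys u \<inter> Poly_Mapping.keys w \<noteq> {}"
proof
  assume "common_nontriv_div u w"
  then obtain d where d: "d \<noteq> 0" "mdvd d u" "mdvd d w" unfolding common_nontriv_div_def by blast
  then obtain t where "t \<in> Poly_Mapping.keys d" by (metis keys_eq_empty ex_in_conv)
  hence "Poly_Mapping.lookup d t \<noteq> 0" by (simp add: in_keys_iff)
  hence "t \<in> Poly_Mapping.keys u" "t \<in> Poly_Mapping.keys w" using d unfolding mdvd_def in_keys_iff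
    by (metis le_zero_eq)+
  thus "Poly_Mapping.keys u \<inter> Poly_Mapping.keys w \<noteq> {}" by blast
next
  assume "Poly_Mapping.keys u \<inter> Poly_Mapping.keys w \<noteq> {}"
  then obtain t where t: "t \<in> Poly_Mapping.keys u" "t \<in> Poly_Mapping.keys w" by blast
  have "mdvd (Poly_Mapping.single t 1) u" "mdvd (Poly_Mapping.single t 1) w"
    using t by (auto simp: mdvd_def lookup_single when_def in_keys_iff)
  moreover have "Poly_Mapping.single t (1::nat) \<noteq> 0"
  proof
    assume "Poly_Mapping.single t (1::nat) = 0"
    hence "Poly_Mapping.lookup (Poly_Mapping.single t (1::nat)) t = Poly_Mapping.lookup 0 t" by simp
    thus False by simp
  qed
  ultimately show "common_nontriv_div u w" unfolding common_nontriv_div_def by blast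
qed

lemma ascent_mem: "(p, i) \<in> ascent \<phi> \<longleftrightarrow> (\<forall>q. q < p \<longrightarrow> \<phi> q \<le> i) \<and> i < \<phi> p"
  by (simp add: ascent_def)

lemma graph_mem: "x \<in> graph I \<alpha> \<longleftrightarrow> (\<exists>p\<in>I. x = (p, \<alpha> p))"
  by (auto simp: graph_def)

lemma meet:
  fixes \<phi> :: "'p::{order,finite} \<Rightarrow> nat"
  assumes hj: "hom_ideal J" and ph: "\<phi> \<in> Hom" "\<phi> \<notin> J" and m: "marker J I \<alpha>"
  shows "ascent \<phi> \<inter> graph I \<alpha> \<noteq> {}"
proof -
  have idI: "poset_ideal I" and isoI: "\<forall>p\<in>I. \<forall>q\<in>I. p \<le> q \<longrightarrow> \<alpha> p \<le> \<alpha> q"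
    and ext: "\<forall>\<phi>\<in>Hom. (\<forall>p\<in>I. \<phi> p = \<alpha> p) \<longrightarrow> \<phi> \<in> J"
    using m unfolding marker_def by auto
  have "\<exists>p\<in>I. \<alpha> p < \<phi> p"
  proof (rule ccontr)
    assume "\<not> ?thesis"
    hence le: "\<forall>p\<in>I. \<phi> p \<le> \<alpha> p" by auto
    define c where "c = (\<Sum>q\<in>I. \<alpha> q)"
    have \<alpha>c: "\<forall>p\<in>I. \<alpha> p \<le> c" unfolding c_def by (simp add: member_le_sum)
    define \<psi> where "\<psi> = (\<lambda>p. if p \<in> I then \<alpha> p else max (\<phi> p) c)"
    have "mono \<psi>"
    proof (rule monoI)
      fix x y :: 'p assume xy: "x \<le> y"
      have mph: "\<phi> x \<le> \<phi> y" using ph(1) xy unfolding Hom_def mono_def by auto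
      show "\<psi> x \<le> \<psi> y"
      proof (cases "y \<in> I")
        case True
        hence "x \<in> I" using idI xy unfolding poset_ideal_def by blast
        thus ?thesis using True isoI xy by (simp add: \<psi>_def)
      next
        case False
        thus ?thesis using \<alpha>c mph by (auto simp: \<psi>_def)
      qed
    qed
    hence "\<psi> \<in> J" using ext by (auto simp: Hom_def \<psi>_def)
    moreover have "\<phi> \<le> \<psi>" using le by (auto simp: le_fun_def \<psi>_def)
    ultimately have "\<phi> \<in> J" using hj ph(1) unfolding hom_ideal_def by blast
    thus False using ph(2) by blast
  qed
  then obtain p where p: "p \<in> {p\<in>I. \<alpha> p < \<phi> p}"
     "\<forall>b\<in>{p\<in>I. \<alpha> p < \<phi> p}. b \<le> p \<longrightarrow> p = b"
    using finite_has_minimal[of "{p\<in>I. \<alpha> p < \<phi> p}"] by auto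
  have "\<forall>q. q < p \<longrightarrow> \<phi> q \<le> \<alpha> p"
  proof (intro allI impI)
    fix q assume qp: "q < p"
    hence qI: "q \<in> I" using idI p(1) unfolding poset_ideal_def by auto
    hence "\<phi> q \<le> \<alpha> q" using p(2) qp by force
    also have "\<alpha> q \<le> \<alpha> p" using isoI qI p(1) qp by auto
    finally show "\<phi> q \<le> \<alpha> p" .
  qed
  hence "(p, \<alpha> p) \<in> ascent \<phi>" using p(1) by (simp add: ascent_mem)
  moreover have "(p, \<alpha> p) \<in> graph I \<alpha>" using p(1) by (auto simp: graph_mem)
  ultimately show ?thesis by blast
qed

lemma bound_S:
  assumes "finite (S :: ('p \<times> nat) set)"
  obtains N where "\<forall>x\<in>S. snd x < N"
proof -
  have "finite (snd ` S)" using assms by simp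
  then obtain N where "\<forall>n\<in>snd ` S. n < N" by (metis finite_nat_set_iff_bounded)
  thus ?thesis using that by auto
qed

lemma dual1:
  fixes J :: "('p::{order,finite} \<Rightarrow> nat) set"
  assumes hj: "hom_ideal J" and fin: "finite S"
    and hit: "\<forall>I \<alpha>. marker J I \<alpha> \<longrightarrow> graph I \<alpha> \<inter> S \<noteq> {}"
  shows "\<exists>\<phi>\<in>Hom - J. ascent \<phi> \<subseteq> S"
proof -
  define Q where "Q = (\<lambda>(I::'p set, \<beta>::'p\<Rightarrow>nat). poset_ideal I \<and>
     (\<forall>p\<in>I. \<forall>q\<in>I. p \<le> q \<longrightarrow> \<beta> p \<le> \<beta> q) \<and>
     (\<forall>p\<in>I. (p, \<beta> p) \<notin> S \<and> (\<forall>i. (\<forall>q. q < p \<longrightarrow> \<beta> q \<le> i) \<and> i < \<beta> p \<longrightarrow> (p, i) \<in> S)))"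
  have Q0: "Q ({}, \<lambda>_. 0)" by (simp add: Q_def poset_ideal_def)
  have bnd: "\<forall>Y. Q Y \<longrightarrow> card (fst Y) < card (UNIV::'p set) + 1"
    by (simp add: card_mono less_Suc_eq_le)
  obtain X where X: "Q X" "\<forall>Y. Q Y \<longrightarrow> card (fst Y) \<le> card (fst X)"
    using ex_has_greatest_nat[OF Q0 bnd] by blast
  obtain I \<beta> where IB: "X = (I, \<beta>)" by fastforce
  have idI: "poset_ideal I" and isoI: "\<forall>p\<in>I. \<forall>q\<in>I. p \<le> q \<longrightarrow> \<beta> p \<le> \<beta> q"
    and gI: "\<forall>p\<in>I. (p, \<beta> p) \<notin> S \<and> (\<forall>i. (\<forall>q. q < p \<longrightarrow> \<beta> q \<le> i) \<and> i < \<beta> p \<longrightarrow> (p, i) \<in> S)"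
    using X(1) IB by (auto simp: Q_def)
  have "I = UNIV"
  proof (rule ccontr)
    assume "I \<noteq> UNIV"
    then obtain p where p: "p \<in> - I" "\<forall>b\<in>- I. b \<le> p \<longrightarrow> p = b"
      using finite_has_minimal[of "- I"] by auto
    have below: "\<forall>q. q < p \<longrightarrow> q \<in> I" using p(2) by (metis ComplI less_le)
    obtain N where N: "\<forall>x\<in>S. snd x < N" using bound_S[OF fin] by blast
    define i1 where "i1 = N + (\<Sum>q\<in>UNIV. \<beta> q)"
    have "(\<forall>q. q < p \<longrightarrow> \<beta> q \<le> i1) \<and> (p, i1) \<notin> S"
    proof
      show "\<forall>q. q < p \<longrightarrow> \<beta> q \<le> i1"
      proof (intro allI impI)
        fix q
        have "\<beta> q \<le> (\<Sum>q\<in>UNIV. \<beta> q)" by (rule member_le_sum) auto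
        thus "\<beta> q \<le> i1" unfolding i1_def by linarith
      qed
      show "(p, i1) \<notin> S" using N unfolding i1_def by fastforce
    qed
    define i0 where "i0 = (LEAST i. (\<forall>q. q < p \<longrightarrow> \<beta> q \<le> i) \<and> (p, i) \<notin> S)"
    have i0: "(\<forall>q. q < p \<longrightarrow> \<beta> q \<le> i0) \<and> (p, i0) \<notin> S"
      unfolding i0_def by (rule LeastI) fact
    have i0min: "\<And>i. i < i0 \<Longrightarrow> \<not> ((\<forall>q. q < p \<longrightarrow> \<beta> q \<le> i) \<and> (p, i) \<notin> S)"
      unfolding i0_def by (rule not_less_Least)
    define \<beta>' where "\<beta>' = \<beta>(p := i0)"
    have pI: "p \<notin> I" using p(1) by simp
    have "Q (insert p I, \<beta>')"
      unfolding Q_def prod.case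
    proof (intro conjI)
      show "poset_ideal (insert p I)"
        unfolding poset_ideal_def
      proof (intro ballI allI impI)
        fix x q assume x: "x \<in> insert p I" and qx: "q \<le> x"
        show "q \<in> insert p I"
        proof (cases "x = p")
          case True thus ?thesis using qx below by (auto simp: order.order_iff_strict)
        next
          case False thus ?thesis using x qx idI by (auto simp: poset_ideal_def)
        qed
      qed
      show "\<forall>x\<in>insert p I. \<forall>y\<in>insert p I. x \<le> y \<longrightarrow> \<beta>' x \<le> \<beta>' y"
      proof (intro ballI impI)
        fix x y assume x: "x \<in> insert p I" and y: "y \<in> insert p I" and xy: "x \<le> y"
        show "\<beta>' x \<le> \<beta>' y"
        proof (cases "x = p")
          case True
          show ?thesis
          proof (cases "y = p")
            case False
            hence "y \<in> I" using y by auto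
            hence "p \<in> I" using idI xy True unfolding poset_ideal_def by blast
            thus ?thesis using pI by blast
          qed (simp add: True)
        next
          case False
          hence xI: "x \<in> I" using x by auto
          show ?thesis
          proof (cases "y = p")
            case True
            hence "x < p" using xy False by auto
            thus ?thesis using i0 True False by (simp add: \<beta>'_def)
          next
            case yF: False
            hence "y \<in> I" using y by auto
            thus ?thesis using isoI xI xy False yF by (simp add: \<beta>'_def)
          qed
        qed
      qed
      show "\<forall>x\<in>insert p I. (x, \<beta>' x) \<notin> S \<and>
          (\<forall>i. (\<forall>q. q < x \<longrightarrow> \<beta>' q \<le> i) \<and> i < \<beta>' x \<longrightarrow> (x, i) \<in> S)"
      proof
        fix x assume x: "x \<in> insert p I"
        show "(x, \<beta>' x) \<notin> S \<and> (\<forall>i. (\<forall>q. q < x \<longrightarrow> \<beta>' q \<le> i) \<and> i < \<beta>' x \<longrightarrow> (x, i) \<in> S)"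
        proof (cases "x = p")
          case True
          have eqb: "\<forall>q. q < p \<longrightarrow> \<beta>' q = \<beta> q" by (auto simp: \<beta>'_def)
          show ?thesis using True i0 i0min eqb by (auto simp: \<beta>'_def)
        next
          case False
          hence xI: "x \<in> I" using x by auto
          have eqb: "\<forall>q. q < x \<longrightarrow> \<beta>' q = \<beta> q"
            using xI idI pI unfolding poset_ideal_def \<beta>'_def by fastforce
          show ?thesis using gI xI False eqb by (simp add: \<beta>'_def)
        qed
      qed
    qed
    hence "card (insert p I) \<le> card I" using X(2) IB by fastforce
    moreover have "card (insert p I) = Suc (card I)" using pI by simp
    ultimately show False by simp
  qed
  have mono\<beta>: "\<beta> \<in> Hom" using isoI \<open>I = UNIV\<close> by (auto simp: Hom_def mono_def)
  have asc: "ascent \<beta> \<subseteq> S"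
  proof
    fix x assume "x \<in> ascent \<beta>"
    moreover obtain p i where "x = (p, i)" by fastforce
    ultimately show "x \<in> S" using gI \<open>I = UNIV\<close> by (simp add: ascent_mem)
  qed
  have "\<beta> \<notin> J"
  proof
    assume "\<beta> \<in> J"
    hence "marker J UNIV \<beta>" using isoI \<open>I = UNIV\<close>
      unfolding marker_def poset_ideal_def
    proof (intro conjI ballI impI allI)
      fix \<phi> assume "\<forall>p\<in>UNIV. \<phi> p = \<beta> p"
      hence "\<phi> = \<beta>" by auto
      thus "\<phi> \<in> J" using \<open>\<beta> \<in> J\<close> by simp
    qed auto
    moreover have "graph UNIV \<beta> \<inter> S = {}" using gI \<open>I = UNIV\<close> by (auto simp: graph_mem)
    ultimately show False using hit by blast
  qed
  thus ?thesis using mono\<beta> asc by blast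
qed

lemma dual2:
  fixes J :: "('p::{order,finite} \<Rightarrow> nat) set"
  assumes hj: "hom_ideal J" and fin: "finite S"
    and hit: "\<forall>\<phi>\<in>Hom - J. ascent \<phi> \<inter> S \<noteq> {}"
  shows "\<exists>I \<alpha>. marker J I \<alpha> \<and> graph I \<alpha> \<subseteq> S"
proof -
  define Q where "Q = (\<lambda>(I::'p set, \<beta>::'p\<Rightarrow>nat). poset_ideal I \<and>
     (\<forall>p\<in>I. \<forall>q\<in>I. p \<le> q \<longrightarrow> \<beta> p \<le> \<beta> q) \<and>
     (\<forall>p\<in>I. (p, \<beta> p) \<in> S \<and> (\<forall>i. (\<forall>q. q < p \<longrightarrow> \<beta> q \<le> i) \<and> i < \<beta> p \<longrightarrow> (p, i) \<notin> S)))"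
  have Q0: "Q ({}, \<lambda>_. 0)" by (simp add: Q_def poset_ideal_def)
  have bnd: "\<forall>Y. Q Y \<longrightarrow> card (fst Y) < card (UNIV::'p set) + 1"
    by (simp add: card_mono less_Suc_eq_le)
  obtain X where X: "Q X" "\<forall>Y. Q Y \<longrightarrow> card (fst Y) \<le> card (fst X)"
    using ex_has_greatest_nat[OF Q0 bnd] by blast
  obtain I \<beta> where IB: "X = (I, \<beta>)" by fastforce
  have idI: "poset_ideal I" and isoI: "\<forall>p\<in>I. \<forall>q\<in>I. p \<le> q \<longrightarrow> \<beta> p \<le> \<beta> q"
    and gI: "\<forall>p\<in>I. (p, \<beta> p) \<in> S \<and> (\<forall>i. (\<forall>q. q < p \<longrightarrow> \<beta> q \<le> i) \<and> i < \<beta> p \<longrightarrow> (p, i) \<notin> S)"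
    using X(1) IB by (auto simp: Q_def)
  have claim: "\<And>p i. p \<notin> I \<Longrightarrow> \<forall>q. q < p \<longrightarrow> q \<in> I \<Longrightarrow>
       (\<forall>q. q < p \<longrightarrow> \<beta> q \<le> i) \<Longrightarrow> (p, i) \<notin> S"
  proof
    fix p i assume pI: "p \<notin> I" and below: "\<forall>q. q < p \<longrightarrow> q \<in> I"
      and bi: "\<forall>q. q < p \<longrightarrow> \<beta> q \<le> i" and piS: "(p, i) \<in> S"
    define i0 where "i0 = (LEAST i. (\<forall>q. q < p \<longrightarrow> \<beta> q \<le> i) \<and> (p, i) \<in> S)"
    have i0: "(\<forall>q. q < p \<longrightarrow> \<beta> q \<le> i0) \<and> (p, i0) \<in> S"
      unfolding i0_def by (rule LeastI[of _ i]) (use bi piS in blast)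
    have i0min: "\<And>i. i < i0 \<Longrightarrow> \<not> ((\<forall>q. q < p \<longrightarrow> \<beta> q \<le> i) \<and> (p, i) \<in> S)"
      unfolding i0_def by (rule not_less_Least)
    define \<beta>' where "\<beta>' = \<beta>(p := i0)"
    have "Q (insert p I, \<beta>')"
      unfolding Q_def prod.case
    proof (intro conjI)
      show "poset_ideal (insert p I)"
        unfolding poset_ideal_def
      proof (intro ballI allI impI)
        fix x q assume x: "x \<in> insert p I" and qx: "q \<le> x"
        show "q \<in> insert p I"
        proof (cases "x = p")
          case True thus ?thesis using qx below by (auto simp: order.order_iff_strict)
        next
          case False thus ?thesis using x qx idI by (auto simp: poset_ideal_def)
        qed
      qed
      show "\<forall>x\<in>insert p I. \<forall>y\<in>insert p I. x \<le> y \<longrightarrow> \<beta>' x \<le> \<beta>' y"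
      proof (intro ballI impI)
        fix x y assume x: "x \<in> insert p I" and y: "y \<in> insert p I" and xy: "x \<le> y"
        show "\<beta>' x \<le> \<beta>' y"
        proof (cases "x = p")
          case True
          show ?thesis
          proof (cases "y = p")
            case False
            hence "y \<in> I" using y by auto
            hence "p \<in> I" using idI xy True unfolding poset_ideal_def by blast
            thus ?thesis using pI by blast
          qed (simp add: True)
        next
          case False
          hence xI: "x \<in> I" using x by auto
          show ?thesis
          proof (cases "y = p")
            case True
            hence "x < p" using xy False by auto
            thus ?thesis using i0 True False by (simp add: \<beta>'_def)
          next
            case yF: False
            hence "y \<in> I" using y by auto
            thus ?thesis using isoI xI xy False yF by (simp add: \<beta>'_def)
          qed
        qed
      qed
      show "\<forall>x\<in>insert p I. (x, \<beta>' x) \<in> S \<and>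
          (\<forall>i. (\<forall>q. q < x \<longrightarrow> \<beta>' q \<le> i) \<and> i < \<beta>' x \<longrightarrow> (x, i) \<notin> S)"
      proof
        fix x assume x: "x \<in> insert p I"
        show "(x, \<beta>' x) \<in> S \<and> (\<forall>i. (\<forall>q. q < x \<longrightarrow> \<beta>' q \<le> i) \<and> i < \<beta>' x \<longrightarrow> (x, i) \<notin> S)"
        proof (cases "x = p")
          case True
          have eqb: "\<forall>q. q < p \<longrightarrow> \<beta>' q = \<beta> q" by (auto simp: \<beta>'_def)
          show ?thesis using True i0 i0min eqb by (auto simp: \<beta>'_def)
        next
          case False
          hence xI: "x \<in> I" using x by auto
          have eqb: "\<forall>q. q < x \<longrightarrow> \<beta>' q = \<beta> q"
            using xI idI pI unfolding poset_ideal_def \<beta>'_def by fastforce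
          show ?thesis using gI xI False eqb by (simp add: \<beta>'_def)
        qed
      qed
    qed
    hence "card (insert p I) \<le> card I" using X(2) IB by fastforce
    moreover have "card (insert p I) = Suc (card I)" using pI by simp
    ultimately show False by simp
  qed
  obtain N where N: "\<forall>x\<in>S. snd x < N" using bound_S[OF fin] by blast
  have "marker J I \<beta>"
    unfolding marker_def
  proof (intro conjI ballI impI)
    show "poset_ideal I" by fact
    show "\<And>p q. p \<in> I \<Longrightarrow> q \<in> I \<Longrightarrow> p \<le> q \<Longrightarrow> \<beta> p \<le> \<beta> q" using isoI by blast
    fix \<psi> assume \<psi>: "\<psi> \<in> Hom" and agree: "\<forall>p\<in>I. \<psi> p = \<beta> p"
    show "\<psi> \<in> J"
    proof (rule ccontr)
      assume \<psi>J: "\<psi> \<notin> J"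
      define \<phi> where "\<phi> = (\<lambda>p. if p \<in> I then \<beta> p else max (\<psi> p) N)"
      have "mono \<phi>"
      proof (rule monoI)
        fix x y :: 'p assume xy: "x \<le> y"
        have mps: "\<psi> x \<le> \<psi> y" using \<psi> xy unfolding Hom_def mono_def by auto
        show "\<phi> x \<le> \<phi> y"
        proof (cases "y \<in> I")
          case True
          hence "x \<in> I" using idI xy unfolding poset_ideal_def by blast
          thus ?thesis using True isoI xy by (simp add: \<phi>_def)
        next
          case False
          show ?thesis
          proof (cases "x \<in> I")
            case True
            hence "\<beta> x < N" using gI N by fastforce
            thus ?thesis using True False by (simp add: \<phi>_def)
          next
            case xF: False
            thus ?thesis using False mps by (auto simp: \<phi>_def)
          qed
        qed
      qed
      hence \<phi>H: "\<phi> \<in> Hom" by (simp add: Hom_def)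
      have "\<psi> \<le> \<phi>" using agree by (auto simp: le_fun_def \<phi>_def)
      hence "\<phi> \<notin> J" using hj \<psi> \<psi>J unfolding hom_ideal_def by blast
      then obtain x where x: "x \<in> ascent \<phi>" "x \<in> S" using hit \<phi>H by blast
      obtain p i where pi: "x = (p, i)" by fastforce
      have iN: "i < N" using N x(2) pi by fastforce
      have bq: "\<forall>q. q < p \<longrightarrow> \<phi> q \<le> i" and ip: "i < \<phi> p"
        using x(1) pi by (auto simp: ascent_mem)
      show False
      proof (cases "p \<in> I")
        case True
        have "\<forall>q. q < p \<longrightarrow> \<beta> q \<le> i"
        proof (intro allI impI)
          fix q assume "q < p"
          hence qI: "q \<in> I" using idI True unfolding poset_ideal_def by auto
          have "\<phi> q \<le> i" using bq \<open>q < p\<close> by blast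
          thus "\<beta> q \<le> i" using qI by (simp add: \<phi>_def)
        qed
        moreover have "i < \<beta> p" using ip True by (simp add: \<phi>_def)
        ultimately have "(p, i) \<notin> S" using gI True by blast
        thus False using x(2) pi by simp
      next
        case False
        have below: "\<forall>q. q < p \<longrightarrow> q \<in> I"
        proof (intro allI impI, rule ccontr)
          fix q assume "q < p" "q \<notin> I"
          hence "\<phi> q \<le> i" "q \<notin> I" using bq by blast+
          hence "N \<le> i" by (simp add: \<phi>_def)
          thus False using iN by simp
        qed
        have "\<forall>q. q < p \<longrightarrow> \<beta> q \<le> i" using bq below by (simp add: \<phi>_def)
        hence "(p, i) \<notin> S" using claim False below by blast
        thus False using x(2) pi by simp
      qed
    qed
  qed
  moreover have "graph I \<beta> \<subseteq> S" using gI by (auto simp: graph_mem)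
  ultimately show ?thesis by blast
qed


theorem proposition1p11:
  fixes J :: "('p::{order,finite} \<Rightarrow> nat) set"
    and k_type :: "'k::field itself"
  assumes "hom_ideal J"
  shows "(\<forall>u. monpoly u \<in> (letterplace J :: ('p,'k) mpoly set) \<longleftrightarrow>
              (\<forall>w. monpoly w \<in> (coletterplace J :: ('p,'k) mpoly set) \<longrightarrow> common_nontriv_div u w))
       \<and> (\<forall>w. monpoly w \<in> (coletterplace J :: ('p,'k) mpoly set) \<longleftrightarrow>
              (\<forall>u. monpoly u \<in> (letterplace J :: ('p,'k) mpoly set) \<longrightarrow> common_nontriv_div w u))"
proof -
  note hj = assms
  have finA: "\<forall>T\<in>{ascent \<phi> | \<phi>. \<phi> \<in> Hom - J}. finite T"
  proof
    fix T assume "T \<in> {ascent \<phi> | \<phi>. \<phi> \<in> Hom - J}"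
    then obtain \<phi> :: "'p \<Rightarrow> nat" where T: "T = ascent \<phi>" by blast
    have "T \<subseteq> UNIV \<times> {..< (\<Sum>p\<in>UNIV. \<phi> p)}"
    proof
      fix x assume "x \<in> T"
      moreover obtain p i where "x = (p, i)" by fastforce
      ultimately have "i < \<phi> p" "x = (p, i)" using T by (auto simp: ascent_mem)
      moreover have "\<phi> p \<le> (\<Sum>p\<in>UNIV. \<phi> p)" by (rule member_le_sum) auto
      ultimately show "x \<in> UNIV \<times> {..< (\<Sum>p\<in>UNIV. \<phi> p)}" by auto
    qed
    thus "finite T" by (rule finite_subset) auto
  qed
  have finG: "\<forall>T\<in>{graph I \<alpha> | I \<alpha>. marker J I \<alpha>}. finite T"
  proof
    fix T assume "T \<in> {graph I \<alpha> | I \<alpha>. marker J I \<alpha>}"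
    then obtain I \<alpha> where T: "T = graph I (\<alpha> :: 'p \<Rightarrow> nat)" by blast
    have "T \<subseteq> (\<lambda>p. (p, \<alpha> p)) ` UNIV" using T by (auto simp: graph_mem)
    thus "finite T" by (rule finite_subset) auto
  qed
  have L: "(letterplace J :: ('p,'k) mpoly set) =
     gen_ideal {monpoly (sqf T) | T. T \<in> {ascent \<phi> | \<phi>. \<phi> \<in> Hom - J}}"
    unfolding letterplace_def by (rule arg_cong[where f = gen_ideal]) auto
  have C: "(coletterplace J :: ('p,'k) mpoly set) =
     gen_ideal {monpoly (sqf T) | T. T \<in> {graph I \<alpha> | I \<alpha>. marker J I \<alpha>}}"
    unfolding coletterplace_def by (rule arg_cong[where f = gen_ideal]) auto
  have memL: "\<And>u. monpoly u \<in> (letterplace J :: ('p,'k) mpoly set) \<longleftrightarrow>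
      (\<exists>\<phi>\<in>Hom - J. ascent \<phi> \<subseteq> Poly_Mapping.keys u)"
    unfolding L mon_in_ideal[OF finA] by blast
  have memC: "\<And>w. monpoly w \<in> (coletterplace J :: ('p,'k) mpoly set) \<longleftrightarrow>
      (\<exists>I \<alpha>. marker J I \<alpha> \<and> graph I \<alpha> \<subseteq> Poly_Mapping.keys w)"
    unfolding C mon_in_ideal[OF finG] by blast
  have part1: "monpoly u \<in> (letterplace J :: ('p,'k) mpoly set) \<longleftrightarrow>
      (\<forall>w. monpoly w \<in> (coletterplace J :: ('p,'k) mpoly set) \<longrightarrow> common_nontriv_div u w)" for u
  proof
    assume "monpoly u \<in> (letterplace J :: ('p,'k) mpoly set)"
    then obtain \<phi> where \<phi>: "\<phi> \<in> Hom - J" "ascent \<phi> \<subseteq> Poly_Mapping.keys u" using memL by blast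
    show "\<forall>w. monpoly w \<in> (coletterplace J :: ('p,'k) mpoly set) \<longrightarrow> common_nontriv_div u w"
    proof (intro allI impI)
      fix w assume "monpoly w \<in> (coletterplace J :: ('p,'k) mpoly set)"
      then obtain I \<alpha> where m: "marker J I \<alpha>" "graph I \<alpha> \<subseteq> Poly_Mapping.keys w" using memC by blast
      have "ascent \<phi> \<inter> graph I \<alpha> \<noteq> {}" using meet[OF hj _ _ m(1)] \<phi>(1) by simp
      thus "common_nontriv_div u w" using \<phi>(2) m(2) by (auto simp: cnd_iff)
    qed
  next
    assume R: "\<forall>w. monpoly w \<in> (coletterplace J :: ('p,'k) mpoly set) \<longrightarrow> common_nontriv_div u w"
    have "\<forall>I \<alpha>. marker J I \<alpha> \<longrightarrow> graph I \<alpha> \<inter> Poly_Mapping.keys u \<noteq> {}"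
    proof (intro allI impI)
      fix I \<alpha> assume m: "marker J I \<alpha>"
      have fg: "finite (graph I \<alpha>)" using finG m by blast
      have "monpoly (sqf (graph I \<alpha>)) \<in> (coletterplace J :: ('p,'k) mpoly set)"
        unfolding memC keys_sqf[OF fg] using m by blast
      hence "common_nontriv_div u (sqf (graph I \<alpha>))" using R by blast
      thus "graph I \<alpha> \<inter> Poly_Mapping.keys u \<noteq> {}" by (auto simp: cnd_iff keys_sqf[OF fg])
    qed
    then obtain \<phi> where "\<phi> \<in> Hom - J" "ascent \<phi> \<subseteq> Poly_Mapping.keys u"
      using dual1[OF hj finite_keys] by blast
    thus "monpoly u \<in> (letterplace J :: ('p,'k) mpoly set)" using memL by blast
  qed
  have part2: "monpoly w \<in> (coletterplace J :: ('p,'k) mpoly set) \<longleftrightarrow>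
      (\<forall>u. monpoly u \<in> (letterplace J :: ('p,'k) mpoly set) \<longrightarrow> common_nontriv_div w u)" for w
  proof
    assume "monpoly w \<in> (coletterplace J :: ('p,'k) mpoly set)"
    then obtain I \<alpha> where m: "marker J I \<alpha>" "graph I \<alpha> \<subseteq> Poly_Mapping.keys w" using memC by blast
    show "\<forall>u. monpoly u \<in> (letterplace J :: ('p,'k) mpoly set) \<longrightarrow> common_nontriv_div w u"
    proof (intro allI impI)
      fix u assume "monpoly u \<in> (letterplace J :: ('p,'k) mpoly set)"
      then obtain \<phi> where \<phi>: "\<phi> \<in> Hom - J" "ascent \<phi> \<subseteq> Poly_Mapping.keys u" using memL by blast
      have "ascent \<phi> \<inter> graph I \<alpha> \<noteq> {}" using meet[OF hj _ _ m(1)] \<phi>(1) by simp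
      thus "common_nontriv_div w u" using \<phi>(2) m(2) by (auto simp: cnd_iff)
    qed
  next
    assume R: "\<forall>u. monpoly u \<in> (letterplace J :: ('p,'k) mpoly set) \<longrightarrow> common_nontriv_div w u"
    have "\<forall>\<phi>\<in>Hom - J. ascent \<phi> \<inter> Poly_Mapping.keys w \<noteq> {}"
    proof
      fix \<phi> :: "'p \<Rightarrow> nat" assume m: "\<phi> \<in> Hom - J"
      have fg: "finite (ascent \<phi>)" using finA m by blast
      have "monpoly (sqf (ascent \<phi>)) \<in> (letterplace J :: ('p,'k) mpoly set)"
        unfolding memL keys_sqf[OF fg] using m by blast
      hence "common_nontriv_div w (sqf (ascent \<phi>))" using R by blast
      thus "ascent \<phi> \<inter> Poly_Mapping.keys w \<noteq> {}" by (auto simp: cnd_iff keys_sqf[OF fg])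
    qed
    then obtain I \<alpha> where "marker J I \<alpha>" "graph I \<alpha> \<subseteq> Poly_Mapping.keys w"
      using dual2[OF hj finite_keys] by blast
    thus "monpoly w \<in> (coletterplace J :: ('p,'k) mpoly set)" using memC by blast
  qed
  show ?thesis using part1 part2 by blast
qed

end
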